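(* Let $\Omega\subset\mathbb{R}^d$ be a bounded domain, let $c_\varepsilon:\Omega\times\Omega\to\mathbb{R}$ be a bounded measurable cost function with $\|c_\varepsilon\|_\infty=\sup_{\Omega\times\Omega}|c_\varepsilon|<\infty$, let $\mu_\star,\nu_\star$ be probability measures on $\Omega$, and for each $k\ge 0$ let $\mu_{\star,k},\nu_{\star,k}$ be probability measures on $\Omega$. Define the centered Sinkhorn iterates by $\bar\varphi_0:=0$ and, for $k\ge 0$, $$\bar\psi_k(\mathbf{y}):=-\log\int_\Omega e^{\bar\varphi_k(\mathbf{x})-c_\varepsilon(\mathbf{x},\mathbf{y})}\,\mu_{\star,k}(\mathrm{d}\mathbf{x}),$$ $$\bar\varphi_{k+1}(\mathbf{x}):=-\log\int_\Omega e^{\bar\psi_k(\mathbf{y})-c_\varepsilon(\mathbf{x},\mathbf{y})}\,\nu_{\star,k}(\mathrm{d}\mathbf{y})+\lambda_k,\qquad \lambda_k:=\int_\Omega\log\Big(\int_\Omega e^{\bar\psi_k(\mathbf{y})-c_\varepsilon(\mathbf{x},\mathbf{y})}\,\nu_{\star,k}(\mathrm{d}\mathbf{y})\Big)\mu_\star(\mathrm{d}\mathbf{x}).$$ Then for every $k\ge 0$, $$\|\bar\varphi_k\|_\infty\le 2\|c_\varepsilon\|_\infty,\qquad \|\bar\psi_k\|_\infty\le 3\|c_\varepsilon\|_\infty.$$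
   Context: The constant $\lambda_k$ is a centering constant ensuring $\int_\Omega\bar\varphi_{k+1}\,\mathrm{d}\mu_\star=0$. The measures $\mu_{\star,k},\nu_{\star,k}$ play the role of approximations of the marginals $\mu_\star,\nu_\star$ available at iteration $k$. *)

theory Defs
  imports "HOL-Probability.Probability"
begin

text \<open>Centered Sinkhorn iterates.  Parameters: cost c, the approximate marginals
  mu k (= mu_{star,k}), nu k (= nu_{star,k}), and the reference marginal mus (= mu_star)
  used for the centering constant.\<close>

definition sk_psi_of ::
  "('a \<Rightarrow> 'a \<Rightarrow> real) \<Rightarrow> 'a measure \<Rightarrow> ('a \<Rightarrow> real) \<Rightarrow> 'a \<Rightarrow> real" where
  "sk_psi_of c m phi = (\<lambda>y. - ln (\<integral>x. exp (phi x - c x y) \<partial>m))"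

definition sk_lambda_of ::
  "('a \<Rightarrow> 'a \<Rightarrow> real) \<Rightarrow> 'a measure \<Rightarrow> 'a measure \<Rightarrow> ('a \<Rightarrow> real) \<Rightarrow> real" where
  "sk_lambda_of c n mus psi = (\<integral>x. ln (\<integral>y. exp (psi y - c x y) \<partial>n) \<partial>mus)"

primrec sk_phi ::
  "('a \<Rightarrow> 'a \<Rightarrow> real) \<Rightarrow> (nat \<Rightarrow> 'a measure) \<Rightarrow> (nat \<Rightarrow> 'a measure) \<Rightarrow> 'a measure
    \<Rightarrow> nat \<Rightarrow> 'a \<Rightarrow> real" where
  "sk_phi c mu nu mus 0 = (\<lambda>x. 0)"
| "sk_phi c mu nu mus (Suc k) =
     (let psi = sk_psi_of c (mu k) (sk_phi c mu nu mus k)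
      in (\<lambda>x. - ln (\<integral>y. exp (psi y - c x y) \<partial>(nu k)) + sk_lambda_of c (nu k) mus psi))"

definition sk_psi ::
  "('a \<Rightarrow> 'a \<Rightarrow> real) \<Rightarrow> (nat \<Rightarrow> 'a measure) \<Rightarrow> (nat \<Rightarrow> 'a measure) \<Rightarrow> 'a measure
    \<Rightarrow> nat \<Rightarrow> 'a \<Rightarrow> real" where
  "sk_psi c mu nu mus k = sk_psi_of c (mu k) (sk_phi c mu nu mus k)"

end

theory Submission imports Defs begin

lemma helper:
  fixes \<Omega> :: "'a::euclidean_space set" and g :: "'a \<Rightarrow> 'a \<Rightarrow> real"
  assumes m: "prob_space m" "sets m = sets (restrict_space borel \<Omega>)"
  and g: "(\<lambda>(p,z). g p z) \<in> borel_measurable (restrict_space borel \<Omega> \<Otimes>\<^sub>M restrict_space borel \<Omega>)"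
  and b: "\<And>p z. p\<in>\<Omega> \<Longrightarrow> z\<in>\<Omega> \<Longrightarrow> \<bar>g p z\<bar> \<le> B"
  shows "(\<lambda>p. \<integral>z. exp (g p z) \<partial>m) \<in> borel_measurable (restrict_space borel \<Omega>)"
  and "\<And>p. p\<in>\<Omega> \<Longrightarrow> integrable m (\<lambda>z. exp (g p z))"
  and "\<And>p. p\<in>\<Omega> \<Longrightarrow> exp (-B) \<le> (\<integral>z. exp (g p z) \<partial>m) \<and> (\<integral>z. exp (g p z) \<partial>m) \<le> exp B"
proof -
  interpret prob_space m by fact
  have sp: "space m = \<Omega>" using sets_eq_imp_space_eq[OF m(2)] by (simp add: space_restrict_space)
  have sets': "sets (restrict_space borel \<Omega> \<Otimes>\<^sub>M restrict_space borel \<Omega>) = sets (restrict_space borel \<Omega> \<Otimes>\<^sub>M m)"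
    using m(2) by (intro sets_pair_measure_cong) auto
  have g': "(\<lambda>(p,z). exp (g p z)) \<in> borel_measurable (restrict_space borel \<Omega> \<Otimes>\<^sub>M m)"
  proof -
    have g0: "(\<lambda>(p,z). g p z) \<in> borel_measurable (restrict_space borel \<Omega> \<Otimes>\<^sub>M m)"
      using g unfolding measurable_cong_sets[OF sets' refl] .
    have "(\<lambda>x. exp ((\<lambda>(p,z). g p z) x)) \<in> borel_measurable (restrict_space borel \<Omega> \<Otimes>\<^sub>M m)"
      by (rule measurable_compose[OF g0 borel_measurable_exp])
    then show ?thesis by (simp add: case_prod_beta')
  qed
  show "(\<lambda>p. \<integral>z. exp (g p z) \<partial>m) \<in> borel_measurable (restrict_space borel \<Omega>)"
    by (rule borel_measurable_lebesgue_integral) (use g' in simp)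
  fix p assume p: "p \<in> \<Omega>"
  have meas: "(\<lambda>z. exp (g p z)) \<in> borel_measurable m"
  proof -
    have "(\<lambda>z. (p,z)) \<in> measurable m (restrict_space borel \<Omega> \<Otimes>\<^sub>M m)"
      using p by (intro measurable_Pair) (auto simp: space_restrict_space)
    from measurable_comp[OF this g'] show ?thesis by (simp add: comp_def)
  qed
  have bd: "\<And>z. z \<in> space m \<Longrightarrow> exp (-B) \<le> exp (g p z) \<and> exp (g p z) \<le> exp B"
  proof -
    fix z assume "z \<in> space m"
    then have "\<bar>g p z\<bar> \<le> B" using b p sp by auto
    then show "exp (-B) \<le> exp (g p z) \<and> exp (g p z) \<le> exp B" by (simp add: abs_le_iff)
  qed
  show int: "integrable m (\<lambda>z. exp (g p z))"
    by (rule integrable_const_bound[where B="exp B"]) (use bd meas in auto)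
  show "exp (-B) \<le> (\<integral>z. exp (g p z) \<partial>m) \<and> (\<integral>z. exp (g p z) \<partial>m) \<le> exp B"
    using bd by (intro conjI integral_ge_const integral_le_const int AE_I2) auto
qed
lemma ln_bound:
  fixes I B :: real
  assumes "exp (-B) \<le> I" "I \<le> exp B"
  shows "\<bar>ln I\<bar> \<le> B"
proof -
  have I: "0 < I" using assms(1) by (meson exp_gt_zero less_le_trans)
  have "ln I \<le> B" using ln_le_cancel_iff[of I "exp B"] I assms by simp
  moreover have "-B \<le> ln I" using ln_le_cancel_iff[of "exp (-B)" I] I assms by simp
  ultimately show ?thesis by linarith
qed

lemma c_swap:
  fixes \<Omega> :: "'a::euclidean_space set" and c :: "'a \<Rightarrow> 'a \<Rightarrow> real"
  assumes cm: "(\<lambda>(x, y). c x y) \<in> borel_measurable (restrict_space borel \<Omega> \<Otimes>\<^sub>M restrict_space borel \<Omega>)"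
  shows "(\<lambda>(y, x). c x y) \<in> borel_measurable (restrict_space borel \<Omega> \<Otimes>\<^sub>M restrict_space borel \<Omega>)"
  using measurable_pair_swap[OF cm] by simp

lemma psi_step:
  fixes \<Omega> :: "'a::euclidean_space set" and c :: "'a \<Rightarrow> 'a \<Rightarrow> real"
  assumes m: "prob_space m" "sets m = sets (restrict_space borel \<Omega>)"
  and cm: "(\<lambda>(x, y). c x y) \<in> borel_measurable (restrict_space borel \<Omega> \<Otimes>\<^sub>M restrict_space borel \<Omega>)"
  and cb: "\<And>x y. x \<in> \<Omega> \<Longrightarrow> y \<in> \<Omega> \<Longrightarrow> \<bar>c x y\<bar> \<le> C"
  and phim: "phi \<in> borel_measurable (restrict_space borel \<Omega>)"
  and phib: "\<And>x. x \<in> \<Omega> \<Longrightarrow> \<bar>phi x\<bar> \<le> 2 * C"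
  shows "sk_psi_of c m phi \<in> borel_measurable (restrict_space borel \<Omega>) \<and>
         (\<forall>y\<in>\<Omega>. \<bar>sk_psi_of c m phi y\<bar> \<le> 3 * C)"
proof -
  note [measurable] = c_swap[OF cm] phim
  have gm: "(\<lambda>(y, x). phi x - c x y) \<in> borel_measurable (restrict_space borel \<Omega> \<Otimes>\<^sub>M restrict_space borel \<Omega>)"
  proof -
    have "(\<lambda>p. phi (snd p) - (\<lambda>(y, x). c x y) p) \<in> borel_measurable (restrict_space borel \<Omega> \<Otimes>\<^sub>M restrict_space borel \<Omega>)"
      by measurable
    then show ?thesis by (simp add: case_prod_beta')
  qed
  have gb: "\<And>y x. y \<in> \<Omega> \<Longrightarrow> x \<in> \<Omega> \<Longrightarrow> \<bar>phi x - c x y\<bar> \<le> 3 * C"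
  proof -
    fix y x assume "y \<in> \<Omega>" "x \<in> \<Omega>"
    then have "\<bar>phi x\<bar> \<le> 2 * C" "\<bar>c x y\<bar> \<le> C" using phib cb by auto
    then show "\<bar>phi x - c x y\<bar> \<le> 3 * C" by linarith
  qed
  note h = helper[OF m, where g="\<lambda>y x. phi x - c x y", OF gm gb]
  show ?thesis
  proof
    show "sk_psi_of c m phi \<in> borel_measurable (restrict_space borel \<Omega>)"
      unfolding sk_psi_of_def using h(1) by measurable
    show "\<forall>y\<in>\<Omega>. \<bar>sk_psi_of c m phi y\<bar> \<le> 3 * C"
      unfolding sk_psi_of_def using h(3) ln_bound by (metis abs_minus_cancel)
  qed
qed

lemma phi_step:
  fixes \<Omega> :: "'a::euclidean_space set" and c :: "'a \<Rightarrow> 'a \<Rightarrow> real"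
  assumes n: "prob_space n" "sets n = sets (restrict_space borel \<Omega>)"
  and mus: "prob_space mus" "sets mus = sets (restrict_space borel \<Omega>)"
  and cm: "(\<lambda>(x, y). c x y) \<in> borel_measurable (restrict_space borel \<Omega> \<Otimes>\<^sub>M restrict_space borel \<Omega>)"
  and cb: "\<And>x y. x \<in> \<Omega> \<Longrightarrow> y \<in> \<Omega> \<Longrightarrow> \<bar>c x y\<bar> \<le> C"
  and psim: "psi \<in> borel_measurable (restrict_space borel \<Omega>)"
  and psib: "\<And>x. x \<in> \<Omega> \<Longrightarrow> \<bar>psi x\<bar> \<le> 3 * C"
  shows "(\<lambda>x. - ln (\<integral>y. exp (psi y - c x y) \<partial>n) + sk_lambda_of c n mus psi) \<in> borel_measurable (restrict_space borel \<Omega>) \<and>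
         (\<forall>x\<in>\<Omega>. \<bar>- ln (\<integral>y. exp (psi y - c x y) \<partial>n) + sk_lambda_of c n mus psi\<bar> \<le> 2 * C)"
proof -
  note [measurable] = cm psim
  have gm: "(\<lambda>(x, y). psi y - c x y) \<in> borel_measurable (restrict_space borel \<Omega> \<Otimes>\<^sub>M restrict_space borel \<Omega>)"
  proof -
    have "(\<lambda>p. psi (snd p) - (\<lambda>(x, y). c x y) p) \<in> borel_measurable (restrict_space borel \<Omega> \<Otimes>\<^sub>M restrict_space borel \<Omega>)"
      by measurable
    then show ?thesis by (simp add: case_prod_beta')
  qed
  have gb: "\<And>x y. x \<in> \<Omega> \<Longrightarrow> y \<in> \<Omega> \<Longrightarrow> \<bar>psi y - c x y\<bar> \<le> 4 * C"
  proof -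
    fix x y assume "x \<in> \<Omega>" "y \<in> \<Omega>"
    then have "\<bar>psi y\<bar> \<le> 3 * C" "\<bar>c x y\<bar> \<le> C" using psib cb by auto
    then show "\<bar>psi y - c x y\<bar> \<le> 4 * C" by linarith
  qed
  note h = helper[OF n, where g="\<lambda>x y. psi y - c x y", OF gm gb]
  define J where "J x = (\<integral>y. exp (psi y - c x y) \<partial>n)" for x
  define L where "L x = ln (J x)" for x
  have Jm: "J \<in> borel_measurable (restrict_space borel \<Omega>)" unfolding J_def using h(1) .
  have Lm: "L \<in> borel_measurable (restrict_space borel \<Omega>)" unfolding L_def using Jm by measurable
  have Jpos: "\<And>x. x \<in> \<Omega> \<Longrightarrow> 0 < J x"
    unfolding J_def using h(3) by (meson exp_gt_zero less_le_trans)
  have Lb: "\<And>x. x \<in> \<Omega> \<Longrightarrow> \<bar>L x\<bar> \<le> 4 * C"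
    unfolding L_def J_def using h(3) ln_bound by blast
  have spn: "space n = \<Omega>" using sets_eq_imp_space_eq[OF n(2)] by (simp add: space_restrict_space)
  have spm: "space mus = \<Omega>" using sets_eq_imp_space_eq[OF mus(2)] by (simp add: space_restrict_space)
  have Jcmp: "J x \<le> exp (2 * C) * J x'" if x: "x \<in> \<Omega>" and x': "x' \<in> \<Omega>" for x x'
  proof -
    have "J x \<le> (\<integral>y. exp (2 * C) * exp (psi y - c x' y) \<partial>n)"
      unfolding J_def
    proof (rule integral_mono)
      show "integrable n (\<lambda>y. exp (psi y - c x y))" using h(2) x by blast
      show "integrable n (\<lambda>y. exp (2 * C) * exp (psi y - c x' y))" using h(2) x' by auto
      fix y assume "y \<in> space n"
      then have "\<bar>c x y\<bar> \<le> C" "\<bar>c x' y\<bar> \<le> C" using cb x x' spn by auto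
      then have "psi y - c x y \<le> 2 * C + (psi y - c x' y)" by linarith
      then show "exp (psi y - c x y) \<le> exp (2 * C) * exp (psi y - c x' y)"
        by (simp add: exp_add[symmetric])
    qed
    also have "\<dots> = exp (2 * C) * J x'" unfolding J_def by simp
    finally show ?thesis .
  qed
  have Lcmp: "L x \<le> 2 * C + L x'" if x: "x \<in> \<Omega>" and x': "x' \<in> \<Omega>" for x x'
  proof -
    have "L x \<le> ln (exp (2 * C) * J x')" unfolding L_def
      using Jcmp[OF x x'] Jpos[OF x] Jpos[OF x'] by simp
    also have "\<dots> = 2 * C + L x'" unfolding L_def using Jpos[OF x'] by (simp add: ln_mult)
    finally show ?thesis .
  qed
  interpret P: prob_space mus by fact
  have Lint: "integrable mus L"
  proof (rule P.integrable_const_bound[where B="4 * C"])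
    show "AE x in mus. norm (L x) \<le> 4 * C" using Lb spm by (intro AE_I2) auto
    show "L \<in> borel_measurable mus" using Lm unfolding measurable_cong_sets[OF mus(2) refl] .
  qed
  have lam: "sk_lambda_of c n mus psi = (\<integral>x. L x \<partial>mus)"
    unfolding sk_lambda_of_def L_def J_def ..
  show ?thesis
  proof
    show "(\<lambda>x. - ln (\<integral>y. exp (psi y - c x y) \<partial>n) + sk_lambda_of c n mus psi) \<in> borel_measurable (restrict_space borel \<Omega>)"
      using Lm unfolding L_def J_def by measurable
    show "\<forall>x\<in>\<Omega>. \<bar>- ln (\<integral>y. exp (psi y - c x y) \<partial>n) + sk_lambda_of c n mus psi\<bar> \<le> 2 * C"
    proof
      fix x assume x: "x \<in> \<Omega>"
      have "L x - 2 * C \<le> (\<integral>x. L x \<partial>mus)"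
        using Lcmp x spm by (intro P.integral_ge_const Lint AE_I2) (auto simp: algebra_simps)
      moreover have "(\<integral>x. L x \<partial>mus) \<le> L x + 2 * C"
        using Lcmp x spm by (intro P.integral_le_const Lint AE_I2) (auto simp: algebra_simps)
      moreover have "- ln (\<integral>y. exp (psi y - c x y) \<partial>n) + sk_lambda_of c n mus psi = - L x + (\<integral>x. L x \<partial>mus)"
        unfolding lam L_def J_def ..
      ultimately show "\<bar>- ln (\<integral>y. exp (psi y - c x y) \<partial>n) + sk_lambda_of c n mus psi\<bar> \<le> 2 * C"
        by linarith
    qed
  qed
qed


theorem mainTheorem1:
  fixes \<Omega> :: "'a::euclidean_space set"
    and c :: "'a \<Rightarrow> 'a \<Rightarrow> real"
    and mus nus :: "'a measure"
    and mu nu :: "nat \<Rightarrow> 'a measure"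
  assumes "open \<Omega>" and "connected \<Omega>" and "bounded \<Omega>"
    and "(\<lambda>(x, y). c x y) \<in> borel_measurable (restrict_space borel \<Omega> \<Otimes>\<^sub>M restrict_space borel \<Omega>)"
    and "bounded ((\<lambda>(x, y). c x y) ` (\<Omega> \<times> \<Omega>))"
    and "prob_space mus" and "sets mus = sets (restrict_space borel \<Omega>)"
    and "prob_space nus" and "sets nus = sets (restrict_space borel \<Omega>)"
    and "\<And>k. prob_space (mu k)" and "\<And>k. sets (mu k) = sets (restrict_space borel \<Omega>)"
    and "\<And>k. prob_space (nu k)" and "\<And>k. sets (nu k) = sets (restrict_space borel \<Omega>)"
  shows "\<forall>k. (\<forall>x\<in>\<Omega>. \<bar>sk_phi c mu nu mus k x\<bar> \<le> 2 * (SUP p\<in>\<Omega> \<times> \<Omega>. \<bar>c (fst p) (snd p)\<bar>))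
           \<and> (\<forall>y\<in>\<Omega>. \<bar>sk_psi c mu nu mus k y\<bar> \<le> 3 * (SUP p\<in>\<Omega> \<times> \<Omega>. \<bar>c (fst p) (snd p)\<bar>))"
proof -
  define C where "C = (SUP p\<in>\<Omega> \<times> \<Omega>. \<bar>c (fst p) (snd p)\<bar>)"
  obtain K where K: "\<And>z. z \<in> (\<lambda>(x, y). c x y) ` (\<Omega> \<times> \<Omega>) \<Longrightarrow> norm z \<le> K"
    using assms(5) unfolding bounded_iff by blast
  have bdd: "bdd_above ((\<lambda>p. \<bar>c (fst p) (snd p)\<bar>) ` (\<Omega> \<times> \<Omega>))"
  proof (rule bdd_aboveI)
    fix z assume "z \<in> (\<lambda>p. \<bar>c (fst p) (snd p)\<bar>) ` (\<Omega> \<times> \<Omega>)"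
    then obtain p where p: "p \<in> \<Omega> \<times> \<Omega>" "z = \<bar>c (fst p) (snd p)\<bar>" by blast
    have "c (fst p) (snd p) \<in> (\<lambda>(x, y). c x y) ` (\<Omega> \<times> \<Omega>)"
      using p(1) by (auto simp: case_prod_beta' intro!: image_eqI[where x=p])
    then show "z \<le> K" using K p(2) by fastforce
  qed
  have cb: "\<bar>c x y\<bar> \<le> C" if "x \<in> \<Omega>" "y \<in> \<Omega>" for x y
  proof -
    have "(x, y) \<in> \<Omega> \<times> \<Omega>" using that by simp
    from cSUP_upper[OF this bdd] show ?thesis unfolding C_def by simp
  qed
  have ind: "sk_phi c mu nu mus k \<in> borel_measurable (restrict_space borel \<Omega>) \<and>
            (\<forall>x\<in>\<Omega>. \<bar>sk_phi c mu nu mus k x\<bar> \<le> 2 * C)" for k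
  proof (induction k)
    case 0
    show ?case using cb by fastforce
  next
    case (Suc k)
    have ps: "sk_psi_of c (mu k) (sk_phi c mu nu mus k) \<in> borel_measurable (restrict_space borel \<Omega>) \<and>
         (\<forall>y\<in>\<Omega>. \<bar>sk_psi_of c (mu k) (sk_phi c mu nu mus k) y\<bar> \<le> 3 * C)"
      using Suc.IH by (intro psi_step[OF assms(10,11) assms(4) cb]) auto
    show ?case
      using phi_step[OF assms(12,13) assms(6,7) assms(4) cb, of "sk_psi_of c (mu k) (sk_phi c mu nu mus k)"] ps
      by (simp add: Let_def)
  qed
  show ?thesis
  proof
    fix k
    have "sk_psi c mu nu mus k \<in> borel_measurable (restrict_space borel \<Omega>) \<and>
         (\<forall>y\<in>\<Omega>. \<bar>sk_psi c mu nu mus k y\<bar> \<le> 3 * C)"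
      unfolding sk_psi_def using ind[of k] by (intro psi_step[OF assms(10,11) assms(4) cb]) auto
    then show "(\<forall>x\<in>\<Omega>. \<bar>sk_phi c mu nu mus k x\<bar> \<le> 2 * (SUP p\<in>\<Omega> \<times> \<Omega>. \<bar>c (fst p) (snd p)\<bar>))
           \<and> (\<forall>y\<in>\<Omega>. \<bar>sk_psi c mu nu mus k y\<bar> \<le> 3 * (SUP p\<in>\<Omega> \<times> \<Omega>. \<bar>c (fst p) (snd p)\<bar>))"
      using ind[of k] unfolding C_def by blast
  qed
qed

end
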